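(* Let $Y$ be a sofic shift and $(G,L_G)$ a right-resolving and regular labeled graph presenting $Y$. Then there is a labeled-graph homomorphism $\theta : (G,L_G) \to (\mathbb K(Y), L_{\mathbb K(Y)})$ such that the induced sliding block code satisfies $\theta(\mathcal R(L_G)) \subseteq \mathcal R(L_{\mathbb K(Y)})$. If $(G,L_G)$ is also follower-separated, then $\theta : G \to \mathbb K(Y)$ is injective.
   Context: A labeled graph $(G,L_G)$: finite directed graph (vertices $V_G$, edges $E_G$, source/terminal maps $s_G,t_G$) without sinks or sources, labeling $L_G:E_G\to A$, edge shift $X_G$; $L_G$ acts coordinatewise; presents $Y=L_G(X_G)$. Right-resolving: distinct edges with the same source have distinct labels. $f_G(v)=\{L_G(x): x$ a right-infinite path starting at $v\}$. For $y\in Y$, $F(y)=\{w\in Y[0,\infty): y_{(-\infty,-1]}w\in Y\}$ with $Y[0,\infty)=\{y_{[0,\infty)}:y\in Y\}$. A vertex $v$ is regular if there is $z\in X_G$ whose edge $z_{-1}$ ends at $v$ and $f_G(v)=F(L_G(z))$; the graph is regular if all vertices are. Follower-separated: $f_G(v)=f_G(w)\Rightarrow v=w$. For a sliding block code $\pi:X\to Y$, $\mathbb U(x)=\{z\in X:\exists N\ \forall i\le N,\ z_i=x_i\}$; $x$ is regular for $\pi$ if $\pi$ maps $\mathbb U(x)$ onto $\mathbb U(\pi(x))$; $\mathcal R(\pi)$ is the set of such points. Future cover $(\mathbb K(Y),L_{\mathbb K(Y)})$: vertices the distinct sets $F(y)$, $y\in Y$, and an edge labeled $a$ from $F(y)$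 to $F(z)$ exactly when $F(z)=\{w\in A^{\mathbb N}: aw\in F(y)\}$ (one edge per such pair and label). A labeled-graph homomorphism is a graph homomorphism preserving labels; it induces a sliding block code on edge shifts. *)

theory Defs
  imports Main
begin

definition labeled_graph ::
  "'v set \<Rightarrow> 'e set \<Rightarrow> ('e \<Rightarrow> 'v) \<Rightarrow> ('e \<Rightarrow> 'v) \<Rightarrow> ('e \<Rightarrow> 'a) \<Rightarrow> bool" where
  "labeled_graph V E s t L \<longleftrightarrow> finite V \<and> finite E \<and>
     (\<forall>e\<in>E. s e \<in> V \<and> t e \<in> V) \<and>
     (\<forall>v\<in>V. (\<exists>e\<in>E. s e = v) \<and> (\<exists>e\<in>E. t e = v))"

definition edge_shift :: "'e set \<Rightarrow> ('e \<Rightarrow> 'v) \<Rightarrow> ('e \<Rightarrow> 'v) \<Rightarrow> (int \<Rightarrow> 'e) set" where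
  "edge_shift E s t = {x. (\<forall>i. x i \<in> E) \<and> (\<forall>i. t (x i) = s (x (i + 1)))}"

definition code_map :: "('e \<Rightarrow> 'a) \<Rightarrow> (int \<Rightarrow> 'e) \<Rightarrow> (int \<Rightarrow> 'a)" where
  "code_map L x = (\<lambda>i. L (x i))"

definition presented_shift ::
  "'e set \<Rightarrow> ('e \<Rightarrow> 'v) \<Rightarrow> ('e \<Rightarrow> 'v) \<Rightarrow> ('e \<Rightarrow> 'a) \<Rightarrow> (int \<Rightarrow> 'a) set" where
  "presented_shift E s t L = code_map L ` edge_shift E s t"

definition right_resolving :: "'e set \<Rightarrow> ('e \<Rightarrow> 'v) \<Rightarrow> ('e \<Rightarrow> 'a) \<Rightarrow> bool" where
  "right_resolving E s L \<longleftrightarrow> (\<forall>e\<in>E. \<forall>e'\<in>E. e \<noteq> e' \<and> s e = s e' \<longrightarrow> L e \<noteq> L e')"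

definition follower_set ::
  "'e set \<Rightarrow> ('e \<Rightarrow> 'v) \<Rightarrow> ('e \<Rightarrow> 'v) \<Rightarrow> ('e \<Rightarrow> 'a) \<Rightarrow> 'v \<Rightarrow> (nat \<Rightarrow> 'a) set" where
  "follower_set E s t L v = {(\<lambda>n. L (p n)) | p.
      (\<forall>n. p n \<in> E) \<and> s (p 0) = v \<and> (\<forall>n. t (p n) = s (p (Suc n)))}"

definition follower_separated ::
  "'v set \<Rightarrow> 'e set \<Rightarrow> ('e \<Rightarrow> 'v) \<Rightarrow> ('e \<Rightarrow> 'v) \<Rightarrow> ('e \<Rightarrow> 'a) \<Rightarrow> bool" where
  "follower_separated V E s t L \<longleftrightarrow>
     (\<forall>v\<in>V. \<forall>w\<in>V. follower_set E s t L v = follower_set E s t L w \<longrightarrow> v = w)"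

definition right_rays :: "(int \<Rightarrow> 'a) set \<Rightarrow> (nat \<Rightarrow> 'a) set" where
  "right_rays Y = {(\<lambda>n. y (int n)) | y. y \<in> Y}"

definition glue :: "(int \<Rightarrow> 'a) \<Rightarrow> (nat \<Rightarrow> 'a) \<Rightarrow> (int \<Rightarrow> 'a)" where
  "glue y w = (\<lambda>i. if i < 0 then y i else w (nat i))"

definition future :: "(int \<Rightarrow> 'a) set \<Rightarrow> (int \<Rightarrow> 'a) \<Rightarrow> (nat \<Rightarrow> 'a) set" where
  "future Y y = {w \<in> right_rays Y. glue y w \<in> Y}"

definition regular_vertex ::
  "'e set \<Rightarrow> ('e \<Rightarrow> 'v) \<Rightarrow> ('e \<Rightarrow> 'v) \<Rightarrow> ('e \<Rightarrow> 'a) \<Rightarrow> 'v \<Rightarrow> bool" where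
  "regular_vertex E s t L v \<longleftrightarrow>
     (\<exists>z\<in>edge_shift E s t. t (z (-1)) = v \<and>
        follower_set E s t L v = future (presented_shift E s t L) (code_map L z))"

definition regular_graph ::
  "'v set \<Rightarrow> 'e set \<Rightarrow> ('e \<Rightarrow> 'v) \<Rightarrow> ('e \<Rightarrow> 'v) \<Rightarrow> ('e \<Rightarrow> 'a) \<Rightarrow> bool" where
  "regular_graph V E s t L \<longleftrightarrow> (\<forall>v\<in>V. regular_vertex E s t L v)"

definition left_asymp :: "(int \<Rightarrow> 'b) set \<Rightarrow> (int \<Rightarrow> 'b) \<Rightarrow> (int \<Rightarrow> 'b) set" where
  "left_asymp X x = {z \<in> X. \<exists>N. \<forall>i\<le>N. z i = x i}"

definition regular_points ::
  "((int \<Rightarrow> 'b) \<Rightarrow> (int \<Rightarrow> 'c)) \<Rightarrow> (int \<Rightarrow> 'b) set \<Rightarrow> (int \<Rightarrow> 'c) set \<Rightarrow> (int \<Rightarrow> 'b) set" where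
  "regular_points \<pi> X Y = {x \<in> X. \<pi> ` left_asymp X x = left_asymp Y (\<pi> x)}"

text \<open>Future cover \<bbbK>(Y): vertices are the sets F(y); an edge is a triple
(F, a, F') with F' = {w. a w \<in> F}; source, label, terminal are the components.\<close>
type_synonym 'a fc_vertex = "(nat \<Rightarrow> 'a) set"
type_synonym 'a fc_edge = "'a fc_vertex \<times> 'a \<times> 'a fc_vertex"

definition fc_vertices :: "(int \<Rightarrow> 'a) set \<Rightarrow> 'a fc_vertex set" where
  "fc_vertices Y = {future Y y | y. y \<in> Y}"

definition fc_edges :: "(int \<Rightarrow> 'a) set \<Rightarrow> 'a fc_edge set" where
  "fc_edges Y = {(F, a, F') | F a F'. F \<in> fc_vertices Y \<and> F' \<in> fc_vertices Y \<and>
                   F' = {w. (\<lambda>n. case n of 0 \<Rightarrow> a | Suc m \<Rightarrow> w m) \<in> F}}"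

definition fc_src :: "'a fc_edge \<Rightarrow> 'a fc_vertex" where "fc_src e = fst e"
definition fc_tgt :: "'a fc_edge \<Rightarrow> 'a fc_vertex" where "fc_tgt e = snd (snd e)"
definition fc_lab :: "'a fc_edge \<Rightarrow> 'a" where "fc_lab e = fst (snd e)"

definition labeled_graph_hom ::
  "'v set \<Rightarrow> 'e set \<Rightarrow> ('e \<Rightarrow> 'v) \<Rightarrow> ('e \<Rightarrow> 'v) \<Rightarrow> ('e \<Rightarrow> 'a) \<Rightarrow>
   'w set \<Rightarrow> 'f set \<Rightarrow> ('f \<Rightarrow> 'w) \<Rightarrow> ('f \<Rightarrow> 'w) \<Rightarrow> ('f \<Rightarrow> 'a) \<Rightarrow>
   ('v \<Rightarrow> 'w) \<Rightarrow> ('e \<Rightarrow> 'f) \<Rightarrow> bool" where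
  "labeled_graph_hom V E s t L V' E' s' t' L' \<theta>V \<theta>E \<longleftrightarrow>
     (\<forall>v\<in>V. \<theta>V v \<in> V') \<and>
     (\<forall>e\<in>E. \<theta>E e \<in> E' \<and> s' (\<theta>E e) = \<theta>V (s e) \<and> t' (\<theta>E e) = \<theta>V (t e) \<and> L' (\<theta>E e) = L e)"

end

theory Submission imports Defs begin

lemma fs_edge:
  assumes RR: "right_resolving E s L" and e: "e \<in> E"
  shows "follower_set E s t L (t e) =
    {w. (\<lambda>n. case n of 0 \<Rightarrow> L e | Suc m \<Rightarrow> w m) \<in> follower_set E s t L (s e)}"
proof (intro set_eqI iffI)
  fix w assume "w \<in> follower_set E s t L (t e)"
  then obtain p where p: "w = (\<lambda>n. L (p n))" "\<forall>n. p n \<in> E" "s (p 0) = t e"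
     "\<forall>n. t (p n) = s (p (Suc n))" unfolding follower_set_def by blast
  define p' where "p' = (\<lambda>n. case n of 0 \<Rightarrow> e | Suc m \<Rightarrow> p m)"
  have "(\<lambda>n. case n of 0 \<Rightarrow> L e | Suc m \<Rightarrow> w m) = (\<lambda>n. L (p' n))"
    by (rule ext, simp add: p'_def p split: nat.split)
  moreover have "\<forall>n. p' n \<in> E" using p e by (auto simp: p'_def split: nat.split)
  moreover have "\<forall>n. t (p' n) = s (p' (Suc n))" using p by (auto simp: p'_def split: nat.split)
  moreover have "s (p' 0) = s e" by (simp add: p'_def)
  ultimately show "w \<in> {w. (\<lambda>n. case n of 0 \<Rightarrow> L e | Suc m \<Rightarrow> w m) \<in> follower_set E s t L (s e)}"
    unfolding follower_set_def by blast
next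
  fix w assume "w \<in> {w. (\<lambda>n. case n of 0 \<Rightarrow> L e | Suc m \<Rightarrow> w m) \<in> follower_set E s t L (s e)}"
  then obtain p where p: "(\<lambda>n. case n of 0 \<Rightarrow> L e | Suc m \<Rightarrow> w m) = (\<lambda>n. L (p n))" "\<forall>n. p n \<in> E" "s (p 0) = s e"
     "\<forall>n. t (p n) = s (p (Suc n))" unfolding follower_set_def by blast
  have l0: "L (p 0) = L e" using fun_cong[OF p(1), of 0] by simp
  have ls: "\<And>n. L (p (Suc n)) = w n" using p(1) by (metis old.nat.simps(5))
  have "p 0 = e" using RR p(2) p(3) l0 e unfolding right_resolving_def by metis
  then have "w = (\<lambda>n. L (p (Suc n)))" "\<forall>n. p (Suc n) \<in> E" "s (p (Suc 0)) = t e"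
     "\<forall>n. t (p (Suc n)) = s (p (Suc (Suc n)))" using ls p by auto
  then show "w \<in> follower_set E s t L (t e)" unfolding follower_set_def
    by (intro CollectI exI[of _ "\<lambda>n. p (Suc n)"]) simp
qed

lemma future_ne: "y \<in> Y \<Longrightarrow> (\<lambda>n. y (int n)) \<in> future Y y"
proof -
  assume y: "y \<in> Y"
  have "glue y (\<lambda>n. y (int n)) = y" by (rule ext, simp add: glue_def)
  then show ?thesis using y unfolding future_def right_rays_def by auto
qed

lemma fc_step:
  assumes RR: "right_resolving E s L"
    and ed: "(F, a, F') \<in> fc_edges Y" and fu: "follower_set E s t L u = F"
  shows "\<exists>e\<in>E. s e = u \<and> L e = a \<and> follower_set E s t L (t e) = F'"
proof -
  have F': "F' \<in> fc_vertices Y" and Fd: "F' = {w. (\<lambda>n. case n of 0 \<Rightarrow> a | Suc m \<Rightarrow> w m) \<in> F}"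
    using ed unfolding fc_edges_def by auto
  obtain y where "y \<in> Y" "F' = future Y y" using F' unfolding fc_vertices_def by auto
  then obtain w where "w \<in> F'" using future_ne by blast
  then have "(\<lambda>n. case n of 0 \<Rightarrow> a | Suc m \<Rightarrow> w m) \<in> follower_set E s t L u" using Fd fu by auto
  then obtain p where p: "(\<lambda>n. case n of 0 \<Rightarrow> a | Suc m \<Rightarrow> w m) = (\<lambda>n. L (p n))" "\<forall>n. p n \<in> E" "s (p 0) = u"
    unfolding follower_set_def by blast
  have l0: "L (p 0) = a" using fun_cong[OF p(1), of 0] by simp
  have h: "follower_set E s t L (t (p 0)) =
    {w. (\<lambda>n. case n of 0 \<Rightarrow> L (p 0) | Suc m \<Rightarrow> w m) \<in> follower_set E s t L (s (p 0))}"
    by (rule fs_edge[OF RR p(2)[rule_format, of 0]])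
  have "follower_set E s t L (t (p 0)) = F'"
    unfolding h l0 p(3) fu Fd ..
  then show ?thesis using p(2,3) l0 by blast
qed

primrec pth :: "('v \<Rightarrow> nat \<Rightarrow> 'e) \<Rightarrow> 'v \<Rightarrow> ('e \<Rightarrow> 'v) \<Rightarrow> nat \<Rightarrow> 'e" where
  "pth g u t 0 = g u 0"
| "pth g u t (Suc n) = g (t (pth g u t n)) (Suc n)"

lemma extend_path:
  assumes RR: "right_resolving E s L"
    and z: "z \<in> edge_shift (fc_edges Y) fc_src fc_tgt"
    and fu: "follower_set E s t L u = fc_src (z M)"
  shows "\<exists>p. (\<forall>n. p n \<in> E) \<and> s (p 0) = u \<and> (\<forall>n. t (p n) = s (p (Suc n))) \<and>
             (\<forall>n. L (p n) = fc_lab (z (M + int n)))"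
proof -
  define g where "g = (\<lambda>v k. SOME e. e \<in> E \<and> s e = v \<and> L e = fc_lab (z (M + int k)) \<and>
        follower_set E s t L (t e) = fc_tgt (z (M + int k)))"
  have gP: "g v k \<in> E \<and> s (g v k) = v \<and> L (g v k) = fc_lab (z (M + int k)) \<and>
        follower_set E s t L (t (g v k)) = fc_tgt (z (M + int k))"
    if "follower_set E s t L v = fc_src (z (M + int k))" for v k
  proof -
    have zk: "z (M + int k) \<in> fc_edges Y" using z unfolding edge_shift_def by auto
    obtain F a F' where eq: "z (M + int k) = (F, a, F')" by (cases "z (M + int k)") auto
    have "\<exists>e\<in>E. s e = v \<and> L e = a \<and> follower_set E s t L (t e) = F'"
      using fc_step[OF RR, of F a F' Y t v] zk eq that by (simp add: fc_src_def)
    then have "\<exists>e. e \<in> E \<and> s e = v \<and> L e = fc_lab (z (M + int k)) \<and>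
        follower_set E s t L (t e) = fc_tgt (z (M + int k))"
      using eq by (auto simp: fc_lab_def fc_tgt_def)
    then show ?thesis unfolding g_def by (rule someI_ex)
  qed
  define p where "p = pth g u t"
  have inv: "p n \<in> E \<and> L (p n) = fc_lab (z (M + int n)) \<and>
        follower_set E s t L (t (p n)) = fc_tgt (z (M + int n)) \<and>
        s (p n) = (case n of 0 \<Rightarrow> u | Suc m \<Rightarrow> t (p m))" for n
  proof (induction n)
    case 0
    then show ?case using gP[of u 0] fu by (simp add: p_def)
  next
    case (Suc n)
    have "fc_tgt (z (M + int n)) = fc_src (z (M + int n + 1))"
      using z unfolding edge_shift_def by auto
    moreover have eqM: "M + int (Suc n) = M + int n + 1" by simp
    ultimately have "follower_set E s t L (t (p n)) = fc_src (z (M + int (Suc n)))"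
      unfolding eqM using Suc by simp
    then show ?case using gP[of "t (p n)" "Suc n"] by (simp add: p_def)
  qed
  show ?thesis
    apply (rule exI[of _ p])
    using inv by (metis old.nat.simps(4) old.nat.simps(5))
qed

theorem lemma2p18:
  fixes V :: "'v set" and E :: "'e set" and s t :: "'e \<Rightarrow> 'v" and L :: "'e \<Rightarrow> 'a"
    and Y :: "(int \<Rightarrow> 'a) set"
  assumes "labeled_graph V E s t L"
    and "Y = presented_shift E s t L"
    and "right_resolving E s L"
    and "regular_graph V E s t L"
  shows "\<exists>\<theta>V \<theta>E.
           labeled_graph_hom V E s t L (fc_vertices Y) (fc_edges Y) fc_src fc_tgt fc_lab \<theta>V \<theta>E \<and>
           (\<lambda>x. \<theta>E \<circ> x) ` regular_points (code_map L) (edge_shift E s t) Y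
             \<subseteq> regular_points (code_map fc_lab) (edge_shift (fc_edges Y) fc_src fc_tgt) Y \<and>
           (follower_separated V E s t L \<longrightarrow> inj_on \<theta>V V \<and> inj_on \<theta>E E)"
proof -
  note LG = assms(1) and Yd = assms(2) and RR = assms(3) and REG = assms(4)
  define fV where "fV = follower_set E s t L"
  define tE where "tE = (\<lambda>e. (fV (s e), L e, fV (t e)))"
  have stV: "s e \<in> V" "t e \<in> V" if "e \<in> E" for e using LG that unfolding labeled_graph_def by auto
  have vert: "fV v \<in> fc_vertices Y" if "v \<in> V" for v
  proof -
    have "regular_vertex E s t L v" using REG that unfolding regular_graph_def by blast
    then obtain z where z: "z \<in> edge_shift E s t"
       "follower_set E s t L v = future (presented_shift E s t L) (code_map L z)"
      unfolding regular_vertex_def by blast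
    then have z2: "fV v = future Y (code_map L z)" unfolding fV_def Yd by simp
    have "code_map L z \<in> Y" using z(1) Yd unfolding presented_shift_def by auto
    then show ?thesis using z2 unfolding fc_vertices_def by blast
  qed
  have edge: "tE e \<in> fc_edges Y" if "e \<in> E" for e
  proof -
    have "fV (t e) = {w. (\<lambda>n. case n of 0 \<Rightarrow> L e | Suc m \<Rightarrow> w m) \<in> fV (s e)}"
      unfolding fV_def by (rule fs_edge[OF RR that])
    then show ?thesis using vert[OF stV(1)[OF that]] vert[OF stV(2)[OF that]]
      unfolding fc_edges_def tE_def by blast
  qed
  have hom: "labeled_graph_hom V E s t L (fc_vertices Y) (fc_edges Y) fc_src fc_tgt fc_lab fV tE"
    unfolding labeled_graph_hom_def
  proof (intro conjI ballI)
    fix v assume "v \<in> V" then show "fV v \<in> fc_vertices Y" by (rule vert)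
  next
    fix e assume "e \<in> E" then show "tE e \<in> fc_edges Y" by (rule edge)
  qed (simp_all add: tE_def fc_src_def fc_tgt_def fc_lab_def)
  have shift: "tE \<circ> x \<in> edge_shift (fc_edges Y) fc_src fc_tgt" if "x \<in> edge_shift E s t" for x
    unfolding edge_shift_def
  proof (intro CollectI conjI allI)
    fix i
    show "(tE \<circ> x) i \<in> fc_edges Y" using that edge unfolding edge_shift_def by simp
    have "t (x i) = s (x (i + 1))" using that unfolding edge_shift_def by simp
    then show "fc_tgt ((tE \<circ> x) i) = fc_src ((tE \<circ> x) (i + 1))"
      by (simp add: tE_def fc_src_def fc_tgt_def)
  qed
  have lab: "code_map fc_lab (tE \<circ> x) = code_map L x" for x
    by (rule ext, simp add: code_map_def tE_def fc_lab_def)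
  have reg: "tE \<circ> x \<in> regular_points (code_map fc_lab) (edge_shift (fc_edges Y) fc_src fc_tgt) Y"
    if xr: "x \<in> regular_points (code_map L) (edge_shift E s t) Y" for x
  proof -
    have xX: "x \<in> edge_shift E s t" and xU: "code_map L ` left_asymp (edge_shift E s t) x = left_asymp Y (code_map L x)"
      using xr unfolding regular_points_def by auto
    have "code_map fc_lab ` left_asymp (edge_shift (fc_edges Y) fc_src fc_tgt) (tE \<circ> x) = left_asymp Y (code_map L x)"
    proof (intro set_eqI iffI)
      fix y assume "y \<in> code_map fc_lab ` left_asymp (edge_shift (fc_edges Y) fc_src fc_tgt) (tE \<circ> x)"
      then obtain z N where z: "z \<in> edge_shift (fc_edges Y) fc_src fc_tgt" "\<forall>i\<le>N. z i = tE (x i)"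
        and y: "y = code_map fc_lab z"
        unfolding left_asymp_def by auto
      have fN: "follower_set E s t L (t (x N)) = fc_src (z (N + 1))"
      proof -
        have "fc_tgt (z N) = fc_src (z (N+1))" using z(1) unfolding edge_shift_def by auto
        then show ?thesis using z(2) by (simp add: tE_def fc_tgt_def fV_def)
      qed
      obtain p where p: "\<forall>n. p n \<in> E" "s (p 0) = t (x N)" "\<forall>n. t (p n) = s (p (Suc n))"
             "\<forall>n. L (p n) = fc_lab (z (N + 1 + int n))"
        using extend_path[OF RR z(1) fN] by auto
      define x' where "x' = (\<lambda>i. if i \<le> N then x i else p (nat (i - N - 1)))"
      have x'X: "x' \<in> edge_shift E s t"
        unfolding edge_shift_def
      proof (intro CollectI conjI allI)
        fix i
        show "x' i \<in> E" using xX p(1) unfolding x'_def edge_shift_def by auto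
        show "t (x' i) = s (x' (i + 1))"
        proof (cases "i < N")
          case True then show ?thesis using xX unfolding x'_def edge_shift_def by auto
        next
          case False
          show ?thesis
          proof (cases "i = N")
            case True then show ?thesis using p(2) unfolding x'_def by auto
          next
            case False2: False
            then have "i > N" using False by auto
            then have "nat (i + 1 - N - 1) = Suc (nat (i - N - 1))" by auto
            then show ?thesis using p(3) \<open>i > N\<close> unfolding x'_def by auto
          qed
        qed
      qed
      have "code_map L x' = y"
      proof (rule ext)
        fix i
        show "code_map L x' i = y i"
        proof (cases "i \<le> N")
          case True then show ?thesis using z(2) y by (simp add: code_map_def x'_def tE_def fc_lab_def)
        next
          case False
          then have "N + 1 + int (nat (i - N - 1)) = i" by auto
          then show ?thesis using p(4) False y by (simp add: code_map_def x'_def)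
        qed
      qed
      then have "y \<in> Y" using x'X Yd unfolding presented_shift_def by auto
      moreover have "\<forall>i\<le>N. y i = code_map L x i" using z(2) y
        by (simp add: code_map_def tE_def fc_lab_def)
      ultimately show "y \<in> left_asymp Y (code_map L x)" unfolding left_asymp_def by auto
    next
      fix y assume "y \<in> left_asymp Y (code_map L x)"
      then obtain x' where x': "x' \<in> left_asymp (edge_shift E s t) x" "y = code_map L x'"
        using xU by (metis imageE)
      then obtain N where "x' \<in> edge_shift E s t" "\<forall>i\<le>N. x' i = x i" unfolding left_asymp_def by auto
      then have "tE \<circ> x' \<in> left_asymp (edge_shift (fc_edges Y) fc_src fc_tgt) (tE \<circ> x)"
        using shift unfolding left_asymp_def by (auto intro!: exI[of _ N])
      moreover have "y = code_map fc_lab (tE \<circ> x')" using lab x'(2) by simp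
      ultimately show "y \<in> code_map fc_lab ` left_asymp (edge_shift (fc_edges Y) fc_src fc_tgt) (tE \<circ> x)"
        by blast
    qed
    then show ?thesis unfolding regular_points_def using shift[OF xX] lab by auto
  qed
  have inj: "inj_on fV V \<and> inj_on tE E" if fs: "follower_separated V E s t L"
  proof
    show "inj_on fV V" using fs unfolding follower_separated_def inj_on_def fV_def by blast
  next
    show "inj_on tE E"
    proof (rule inj_onI)
      fix e e' assume ee: "e \<in> E" "e' \<in> E" "tE e = tE e'"
      then have "fV (s e) = fV (s e')" "L e = L e'" by (auto simp: tE_def)
      then have "s e = s e'" using fs stV(1)[OF ee(1)] stV(1)[OF ee(2)]
        unfolding follower_separated_def fV_def by blast
      then show "e = e'" using RR ee \<open>L e = L e'\<close> unfolding right_resolving_def by blast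
    qed
  qed
  have sub: "(\<lambda>x. tE \<circ> x) ` regular_points (code_map L) (edge_shift E s t) Y
             \<subseteq> regular_points (code_map fc_lab) (edge_shift (fc_edges Y) fc_src fc_tgt) Y"
    using reg by (rule image_subsetI)
  show ?thesis
    apply (rule exI[of _ fV], rule exI[of _ tE])
    using hom sub inj by (intro conjI impI) auto
qed

end
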